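(* Let $q$ be a prime power and $t\ge 2$ an integer. Then $OCAN(t,q+1,t,q-1)\le q^{t}-2$.
   Context: For positive integers $m,s$, the RT poset $[m\times s]$ is the set $\{1,\ldots,ms\}$ partitioned into $m$ blocks $B_i=\{is+1,\ldots,(i+1)s\}$ ($i=0,\ldots,m-1$); each block is a chain under the usual order of the integers, and elements of different blocks are incomparable. An anti-ideal is the complement of an ideal (a down-closed set). Given an $N\times n$ array over an alphabet $V$ of size $v$, a set of $t$ columns is covered if in the $N\times t$ subarray formed by those columns every $t$-tuple over $V$ appears as a row at least once. For positive integers with $2\le t\le ms$, an ordered covering array $OCA(N;t,m,s,v)$ is an $N\times ms$ array over an alphabet of size $v$ with columns labeled by the elements of $[m\times s]$ such that for every anti-ideal $J$ of size $t$ the set of columns labeled by $J$ is covered; $OCAN(t,m,s,v)$ is the smallest $N$ for which an $OCA(N;t,m,s,v)$ exists. *)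

theory Defs
  imports "HOL-Number_Theory.Number_Theory" "HOL-Library.FuncSet"
begin

text \<open>RT poset [m x s]: ground set {1..m*s}; element x lies in block (x-1) div s,
  i.e. B_i = {i*s+1, ..., (i+1)*s}; within a block the order is the integer order.\<close>

definition rt_le :: "nat \<Rightarrow> nat \<Rightarrow> nat \<Rightarrow> nat \<Rightarrow> bool" where
  "rt_le m s x y \<longleftrightarrow> x \<in> {1..m*s} \<and> y \<in> {1..m*s} \<and>
     (x - 1) div s = (y - 1) div s \<and> x \<le> y"

definition rt_ideal :: "nat \<Rightarrow> nat \<Rightarrow> nat set \<Rightarrow> bool" where
  "rt_ideal m s I \<longleftrightarrow> I \<subseteq> {1..m*s} \<and>
     (\<forall>y\<in>I. \<forall>x. rt_le m s x y \<longrightarrow> x \<in> I)"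

definition rt_anti_ideal :: "nat \<Rightarrow> nat \<Rightarrow> nat set \<Rightarrow> bool" where
  "rt_anti_ideal m s J \<longleftrightarrow> J \<subseteq> {1..m*s} \<and> rt_ideal m s ({1..m*s} - J)"

definition covered :: "nat \<Rightarrow> nat \<Rightarrow> (nat \<Rightarrow> nat \<Rightarrow> nat) \<Rightarrow> nat set \<Rightarrow> bool" where
  "covered N v A J \<longleftrightarrow> (\<forall>f \<in> J \<rightarrow>\<^sub>E {..<v}. \<exists>r<N. \<forall>j\<in>J. A r j = f j)"

definition is_OCA :: "nat \<Rightarrow> nat \<Rightarrow> nat \<Rightarrow> nat \<Rightarrow> nat \<Rightarrow> (nat \<Rightarrow> nat \<Rightarrow> nat) \<Rightarrow> bool" where
  "is_OCA N t m s v A \<longleftrightarrow>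
     (\<forall>r<N. \<forall>c\<in>{1..m*s}. A r c < v) \<and>
     (\<forall>J. rt_anti_ideal m s J \<and> card J = t \<longrightarrow> covered N v A J)"

definition OCAN :: "nat \<Rightarrow> nat \<Rightarrow> nat \<Rightarrow> nat \<Rightarrow> nat" where
  "OCAN t m s v = (LEAST N. \<exists>A. is_OCA N t m s v A)"

end

theory Submission
  imports Defs "HOL-Algebra.Algebraic_Closure" "HOL-Algebra.Polynomial_Divisibility"
begin

lemma (in cring) binomial_cring:
  assumes a: "a \<in> carrier R" and b: "b \<in> carrier R"
  shows "(a \<oplus> b) [^] n = (\<Oplus>k\<in>{..n}. [(n choose k)] \<cdot> (a [^] k \<otimes> b [^] (n - k)))"
proof (induction n)
  case 0
  show ?case using a b by simp
next
  case (Suc n)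
  define f where "f k = [(n choose k)] \<cdot> (a [^] k \<otimes> b [^] (n - k))" for k
  define u where "u k = a [^] Suc k \<otimes> b [^] (n - k)" for k
  define g where "g k = [(Suc n choose k)] \<cdot> (a [^] k \<otimes> b [^] (Suc n - k))" for k
  define h where "h k = [(n choose k)] \<cdot> (a [^] k \<otimes> b [^] (Suc n - k))" for k
  have fc: "f k \<in> carrier R" for k unfolding f_def using a b by simp
  have uc: "u k \<in> carrier R" for k unfolding u_def using a b by simp
  have gc: "g k \<in> carrier R" for k unfolding g_def using a b by simp
  have hc: "h k \<in> carrier R" for k unfolding h_def using a b by simp
  have fa: "f k \<otimes> a = [(n choose k)] \<cdot> u k" for k
  proof -
    have "f k \<otimes> a = [(n choose k)] \<cdot> ((a [^] k \<otimes> b [^] (n - k)) \<otimes> a)"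
      unfolding f_def using a b add_pow_ldistr by simp
    also have "(a [^] k \<otimes> b [^] (n - k)) \<otimes> a = u k"
      unfolding u_def using a b by (simp add: m_ac)
    finally show ?thesis .
  qed
  have fb: "k \<le> n \<Longrightarrow> f k \<otimes> b = h k" for k
  proof -
    assume k: "k \<le> n"
    have "f k \<otimes> b = [(n choose k)] \<cdot> ((a [^] k \<otimes> b [^] (n - k)) \<otimes> b)"
      unfolding f_def using a b add_pow_ldistr by simp
    also have "(a [^] k \<otimes> b [^] (n - k)) \<otimes> b = a [^] k \<otimes> b [^] (Suc n - k)"
      using a b k by (simp add: m_assoc Suc_diff_le)
    finally show ?thesis unfolding h_def .
  qed
  have gS: "g (Suc k) = [(n choose k)] \<cdot> u k \<oplus> [(n choose Suc k)] \<cdot> u k" for k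
    unfolding g_def u_def using a b by (simp add: add.nat_pow_mult)
  have hS: "h (Suc k) = [(n choose Suc k)] \<cdot> u k" for k
    unfolding h_def u_def by simp
  have "(a \<oplus> b) [^] Suc n = (\<Oplus>k\<in>{..n}. f k) \<otimes> (a \<oplus> b)"
    using Suc unfolding f_def by simp
  also have "\<dots> = (\<Oplus>k\<in>{..n}. f k) \<otimes> a \<oplus> (\<Oplus>k\<in>{..n}. f k) \<otimes> b"
    using a b fc by (simp add: r_distr)
  also have "\<dots> = (\<Oplus>k\<in>{..n}. f k \<otimes> a) \<oplus> (\<Oplus>k\<in>{..n}. f k \<otimes> b)"
    using a b fc by (simp add: finsum_ldistr)
  also have "(\<Oplus>k\<in>{..n}. f k \<otimes> a) = (\<Oplus>k\<in>{..n}. [(n choose k)] \<cdot> u k)"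
    using fa by simp
  also have "(\<Oplus>k\<in>{..n}. f k \<otimes> b) = (\<Oplus>k\<in>{..n}. h k)"
    using fb hc by (intro finsum_cong') auto
  also have "(\<Oplus>k\<in>{..n}. h k) = (\<Oplus>k\<in>{..Suc n}. h k)"
  proof -
    have "h (Suc n) = \<zero>" unfolding h_def by (simp add: binomial_eq_0)
    thus ?thesis using hc by (simp add: finsum_Suc)
  qed
  also have "\<dots> = (\<Oplus>k\<in>{..n}. h (Suc k)) \<oplus> h 0"
    using hc by (simp del: finsum_Suc add: finsum_Suc2)
  also have "(\<Oplus>k\<in>{..n}. h (Suc k)) = (\<Oplus>k\<in>{..n}. [(n choose Suc k)] \<cdot> u k)"
    using hS by simp
  also have "h 0 = g 0" unfolding h_def g_def by simp
  finally have L: "(a \<oplus> b) [^] Suc n = (\<Oplus>k\<in>{..n}. [(n choose k)] \<cdot> u k) \<oplus>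
      ((\<Oplus>k\<in>{..n}. [(n choose Suc k)] \<cdot> u k) \<oplus> g 0)" .
  have "(\<Oplus>k\<in>{..Suc n}. g k) = (\<Oplus>k\<in>{..n}. g (Suc k)) \<oplus> g 0"
    using gc by (simp del: finsum_Suc add: finsum_Suc2)
  also have "(\<Oplus>k\<in>{..n}. g (Suc k)) = (\<Oplus>k\<in>{..n}. [(n choose k)] \<cdot> u k \<oplus> [(n choose Suc k)] \<cdot> u k)"
    using gS by simp
  also have "\<dots> = (\<Oplus>k\<in>{..n}. [(n choose k)] \<cdot> u k) \<oplus> (\<Oplus>k\<in>{..n}. [(n choose Suc k)] \<cdot> u k)"
    using uc by (simp add: finsum_addf)
  finally have Rr: "(\<Oplus>k\<in>{..Suc n}. g k) = (\<Oplus>k\<in>{..n}. [(n choose k)] \<cdot> u k) \<oplus> (\<Oplus>k\<in>{..n}. [(n choose Suc k)] \<cdot> u k) \<oplus> g 0" .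
  show ?case unfolding g_def[symmetric] L Rr
    using uc gc by (simp add: a_assoc)
qed

lemma (in cring) char_add_pow_zero:
  assumes char: "[(p::nat)] \<cdot> \<one> = \<zero>" and x: "x \<in> carrier R" and d: "p dvd m"
  shows "[m] \<cdot> x = \<zero>"
proof -
  obtain c where m: "m = p * c" using d by auto
  have "[p] \<cdot> x = \<zero>"
  proof -
    have "[p] \<cdot> x = [p] \<cdot> (\<one> \<otimes> x)" using x by simp
    also have "\<dots> = ([p] \<cdot> \<one>) \<otimes> x" using x add_pow_ldistr by simp
    finally show ?thesis using char x by simp
  qed
  hence "[c] \<cdot> ([p] \<cdot> x) = \<zero>" by simp
  thus ?thesis using x m by (simp add: add.nat_pow_pow)
qed

lemma (in cring) frobenius:
  assumes p: "Factorial_Ring.prime (p::nat)" and char: "[p] \<cdot> \<one> = \<zero>"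
    and a: "a \<in> carrier R" and b: "b \<in> carrier R"
  shows "(a \<oplus> b) [^] p = a [^] p \<oplus> b [^] p"
proof -
  define F where "F k = [(p choose k)] \<cdot> (a [^] k \<otimes> b [^] (p - k))" for k
  have p0: "p \<noteq> 0" using p by auto
  have "(a \<oplus> b) [^] p = (\<Oplus>k\<in>{..p}. F k)" unfolding F_def using binomial_cring[OF a b] .
  also have "\<dots> = (\<Oplus>k\<in>{..p}. (if p = k then a [^] p else \<zero>) \<oplus> (if 0 = k then b [^] p else \<zero>))"
  proof (intro finsum_cong')
    show "F k = (if p = k then a [^] p else \<zero>) \<oplus> (if 0 = k then b [^] p else \<zero>)" if "k \<in> {..p}" for k
    proof -
      have "k = 0 \<or> k = p \<or> (0 < k \<and> k < p)" using that by auto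
      then consider "k = 0" | "k = p" | "0 < k \<and> k < p" by blast
      thus ?thesis
      proof cases
        case 1 thus ?thesis using p0 a b unfolding F_def by simp
      next
        case 2
        hence "F k = a [^] p" unfolding F_def using a b by simp
        thus ?thesis using 2 p0 a b by simp
      next
        case 3
        hence dv: "p dvd (p choose k)" using dvd_choose_prime[of k p] p by auto
        have "F k = \<zero>" unfolding F_def using char_add_pow_zero[OF char _ dv] a b by simp
        thus ?thesis using 3 by simp
      qed
    qed
  qed (use a b in auto)
  also have "\<dots> = (\<Oplus>k\<in>{..p}. (if p = k then a [^] p else \<zero>)) \<oplus> (\<Oplus>k\<in>{..p}. (if 0 = k then b [^] p else \<zero>))"
    using a b by (intro finsum_addf) auto
  also have "\<dots> = a [^] p \<oplus> b [^] p"
    using a b finsum_singleton[of 0 "{..p}" "\<lambda>k. b [^] p"] finsum_singleton[of p "{..p}" "\<lambda>k. a [^] p"] by simp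
  finally show ?thesis .
qed

lemma (in cring) frobenius_pow:
  assumes p: "Factorial_Ring.prime (p::nat)" and char: "[p] \<cdot> \<one> = \<zero>"
    and a: "a \<in> carrier R" and b: "b \<in> carrier R"
  shows "(a \<oplus> b) [^] (p ^ n) = a [^] (p ^ n) \<oplus> b [^] (p ^ n)"
proof (induction n)
  case 0 thus ?case using a b by simp
next
  case (Suc n)
  have "(a \<oplus> b) [^] (p ^ Suc n) = ((a \<oplus> b) [^] (p ^ n)) [^] p"
    using a b by (simp add: nat_pow_pow mult.commute)
  also have "\<dots> = (a [^] (p ^ n)) [^] p \<oplus> (b [^] (p ^ n)) [^] p"
    unfolding Suc using frobenius[OF p char] a b by simp
  also have "\<dots> = a [^] (p ^ Suc n) \<oplus> b [^] (p ^ Suc n)"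
    using a b by (simp add: nat_pow_pow mult.commute)
  finally show ?case .
qed

lemma (in ring_hom_ring) hom_add_pow:
  assumes "x \<in> carrier R" shows "h ([(n::nat)] \<cdot>\<^bsub>R\<^esub> x) = [n] \<cdot>\<^bsub>S\<^esub> (h x)"
proof (induction n)
  case 0 thus ?case by simp
next
  case (Suc n)
  thus ?case using assms by (simp add: add.nat_pow_Suc R.add.nat_pow_Suc)
qed

lemma (in residues) add_pow_one_res: "[(n::nat)] \<cdot> \<one> = int n mod m"
proof (induction n)
  case 0 thus ?case by (simp add: res_zero_eq)
next
  case (Suc n)
  have "[Suc n] \<cdot> \<one> = [n] \<cdot> \<one> \<oplus> \<one>" by (simp add: add.nat_pow_Suc)
  also have "\<dots> = (int n mod m + 1) mod m" using Suc by (simp add: res_add_eq res_one_eq)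
  also have "\<dots> = int (Suc n) mod m" by (metis mod_add_left_eq of_nat_Suc add.commute)
  finally show ?case .
qed

lemma (in residues_prime) char_res: "[p] \<cdot> \<one> = \<zero>"
  using add_pow_one_res[of p] by (simp add: res_zero_eq)

context algebraically_closed begin

lemma fix_subfield:
  assumes p: "Factorial_Ring.prime (p::nat)" and char: "[p] \<cdot> \<one> = \<zero>" and q: "q = p ^ n" "n > 0"
  shows "subfield {x \<in> carrier L. x [^] q = x} L"
proof -
  define F where "F = {x \<in> carrier L. x [^] q = x}"
  have q0: "q \<noteq> 0" using q p by (simp add: prime_gt_0_nat)
  have sr: "subring F L"
  proof (rule subringI)
    show "F \<subseteq> carrier L" unfolding F_def by auto
    show "\<one> \<in> F" unfolding F_def by simp
  next
    fix h assume h: "h \<in> F"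
    hence hc: "h \<in> carrier L" and hq: "h [^] q = h" unfolding F_def by auto
    have "(\<ominus> h) [^] q \<oplus> h [^] q = (\<ominus> h \<oplus> h) [^] q"
      using frobenius_pow[OF p char, of "\<ominus> h" h n] hc q by simp
    also have "\<dots> = \<zero>" using hc q0 by (simp add: l_neg nat_pow_zero)
    finally have "(\<ominus> h) [^] q \<oplus> h = \<zero>" using hq by simp
    hence "\<ominus> h = (\<ominus> h) [^] q" using hc by (intro minus_equality) auto
    thus "\<ominus> h \<in> F" unfolding F_def using hc by simp
  next
    fix h1 h2 assume "h1 \<in> F" "h2 \<in> F"
    thus "h1 \<otimes> h2 \<in> F" unfolding F_def by (simp add: nat_pow_distrib)
  next
    fix h1 h2 assume "h1 \<in> F" "h2 \<in> F"
    thus "h1 \<oplus> h2 \<in> F" unfolding F_def using frobenius_pow[OF p char, of h1 h2 n] q by simp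
  qed
  show ?thesis unfolding F_def[symmetric]
  proof (rule subfieldI'[OF sr])
    fix k assume k: "k \<in> F - {\<zero>}"
    hence kc: "k \<in> carrier L" and kq: "k [^] q = k" and k0: "k \<noteq> \<zero>" unfolding F_def by auto
    have ku: "k \<in> Units L" using kc k0 field_Units by auto
    have ic: "inv k \<in> carrier L" using ku by simp
    have "(inv k) [^] q \<otimes> k = (inv k) [^] q \<otimes> k [^] q" using kq by simp
    also have "\<dots> = (inv k \<otimes> k) [^] q" using ic kc by (simp add: nat_pow_distrib)
    also have "\<dots> = \<one>" using ku by simp
    finally have "(inv k) [^] q \<otimes> k = \<one>" .
    hence "inv k = (inv k) [^] q" using ic kc
      by (metis comm_inv_char m_comm nat_pow_closed)
    thus "inv k \<in> F" unfolding F_def using ic by simp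
  qed
qed

end

lemma (in ring) add_pow_upd: "[(n::nat)] \<cdot>\<^bsub>R \<lparr> carrier := K \<rparr>\<^esub> x = [n] \<cdot> x"
  by (simp add: add_pow_def nat_pow_def)

lemma (in ring) nat_pow_upd: "x [^]\<^bsub>R \<lparr> carrier := K \<rparr>\<^esub> (n::nat) = x [^] n"
  by (simp add: nat_pow_def)

lemma (in ring) cancel_helper:
  assumes "A \<in> carrier R" "B \<in> carrier R" "C \<in> carrier R"
  shows "(A \<oplus> C) \<ominus> (B \<oplus> C) = A \<ominus> B"
proof -
  have "(A \<oplus> C) \<ominus> (B \<oplus> C) = (A \<oplus> C) \<oplus> (\<ominus> C \<oplus> \<ominus> B)"
    using assms by (simp add: a_minus_def minus_add a_comm)
  also have "\<dots> = A \<oplus> (C \<oplus> \<ominus> C) \<oplus> \<ominus> B"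
    using assms by (simp add: a_assoc)
  also have "\<dots> = A \<ominus> B" using assms by (simp add: r_neg a_minus_def)
  finally show ?thesis .
qed
lemma (in cring) cancel_helper2:
  assumes "A \<in> carrier R" "B \<in> carrier R" 
  shows "A \<otimes> B \<ominus> A = A \<otimes> (B \<ominus> \<one>)"
  using assms by (simp add: a_minus_def r_distr r_minus)

context algebraically_closed begin

lemma fix_card:
  assumes p: "Factorial_Ring.prime (p::nat)" and char: "[p] \<cdot> \<one> = \<zero>" and q: "q = p ^ n" "n > 0"
  shows "card {x \<in> carrier L. x [^] q = x} = q"
proof -
  define F where "F = {x \<in> carrier L. x [^] q = x}"
  interpret UP: domain "poly_ring L" using univ_poly_is_domain[OF carrier_is_subring] .
  have p2: "p \<ge> 2" using p by (simp add: prime_ge_2_nat)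
  have q2: "q \<ge> 2"
  proof -
    have "p ^ 1 \<le> p ^ n" using q p2 by (intro power_increasing) auto
    thus ?thesis using q p2 by simp
  qed
  have Xc: "X \<in> carrier (poly_ring L)" using var_closed(1)[OF carrier_is_subring] .
  define P where "P = X [^]\<^bsub>poly_ring L\<^esub> q \<ominus>\<^bsub>poly_ring L\<^esub> X"
  have Pc: "P \<in> carrier (poly_ring L)" using Xc by (simp add: P_def)
  have evP: "eval P x = x [^] q \<ominus> x" if x: "x \<in> carrier L" for x
  proof -
    interpret E: ring_hom_ring "poly_ring L" L "\<lambda>p. eval p x"
      using ring_hom_ringI2[OF UP.ring_axioms ring_axioms eval_is_hom[OF carrier_is_subring x]] .
    have "eval P x = eval (X [^]\<^bsub>poly_ring L\<^esub> q) x \<oplus> \<ominus> (eval X x)"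
      unfolding P_def a_minus_def using Xc by simp
    also have "\<dots> = x [^] q \<ominus> x"
      using E.hom_nat_pow[OF Xc] eval_var[OF x] by (simp add: a_minus_def)
    finally show ?thesis .
  qed
  have degP: "degree P = q"
  proof -
    have m: "X [^]\<^bsub>poly_ring L\<^esub> q = monom \<one> q"
      using unitary_monom_eq_var_pow[OF carrier_is_subring] by simp
    have P: "P = poly_add (monom \<one> q) (\<ominus>\<^bsub>poly_ring L\<^esub> X)"
      unfolding P_def m a_minus_def univ_poly_add by simp
    have pm: "polynomial (carrier L) (monom \<one> q)"
      using monom_is_polynomial[OF carrier_is_subring, of \<one> q] by simp
    have pX: "polynomial (carrier L) (\<ominus>\<^bsub>poly_ring L\<^esub> X)"
      using Xc univ_poly_carrier by blast
    have dm: "degree (monom \<one> q) = q" unfolding monom_def by simp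
    have dX: "degree (\<ominus>\<^bsub>poly_ring L\<^esub> X) = 1"
      using univ_poly_a_inv_degree[OF carrier_is_subring Xc] by (simp add: var_def)
    show ?thesis unfolding P using poly_add_degree_eq[OF carrier_is_subring pm pX] dm dX q2 by simp
  qed
  have Pne: "P \<noteq> []" using degP q2 by auto
  have sz: "size (roots P) = q"
    using roots_over_carrier[OF Pc] degP unfolding splitted_def by simp
  have mult1: "count (roots P) a \<le> 1" for a
  proof (rule ccontr)
    assume "\<not> count (roots P) a \<le> 1"
    hence am: "2 \<le> alg_mult P a" using alg_mult_eq_count_roots[OF Pc] by simp
    have a: "a \<in> carrier L"
    proof (rule ccontr)
      assume "a \<notin> carrier L" thus False using am Pne unfolding alg_mult_def by simp
    qed
    have "0 < alg_mult P a" using am by simp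
    hence "is_root P a" using alg_mult_gt_zero_iff_is_root[OF Pc, of a] by simp
    hence aq: "a [^] q = a" using evP[OF a] a unfolding is_root_def
      by (simp add: r_right_minus_eq)
    define Xa where "Xa = [\<one>, \<ominus> a]"
    have Xac: "Xa \<in> carrier (poly_ring L)"
      unfolding Xa_def univ_poly_carrier[symmetric] polynomial_def using a by simp
    have "(Xa [^]\<^bsub>poly_ring L\<^esub> (2::nat)) pdivides P"
      using le_alg_mult_imp_pdivides[OF a Pc am] unfolding Xa_def .
    then obtain G where Gc: "G \<in> carrier (poly_ring L)"
      and PG: "P = (Xa [^]\<^bsub>poly_ring L\<^esub> (2::nat)) \<otimes>\<^bsub>poly_ring L\<^esub> G"
      unfolding pdivides_def by auto
    define Ca where "Ca = poly_of_const a"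
    interpret C: ring_hom_ring "L \<lparr> carrier := carrier L \<rparr>" "poly_ring L" poly_of_const
      using canonical_embedding_ring_hom[OF carrier_is_subring] .
    have Cac: "Ca \<in> carrier (poly_ring L)" unfolding Ca_def using C.hom_closed a by simp
    have XX: "X = Xa \<oplus>\<^bsub>poly_ring L\<^esub> Ca"
      unfolding Xa_def Ca_def var_def poly_of_const_def univ_poly_add using a by (auto simp: l_neg)
    have charP: "[p] \<cdot>\<^bsub>poly_ring L\<^esub> \<one>\<^bsub>poly_ring L\<^esub> = \<zero>\<^bsub>poly_ring L\<^esub>"
    proof -
      have "poly_of_const ([p] \<cdot>\<^bsub>L \<lparr> carrier := carrier L \<rparr>\<^esub> \<one>\<^bsub>L \<lparr> carrier := carrier L \<rparr>\<^esub>)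
          = [p] \<cdot>\<^bsub>poly_ring L\<^esub> poly_of_const \<one>\<^bsub>L \<lparr> carrier := carrier L \<rparr>\<^esub>"
        by (rule C.hom_add_pow) simp
      thus ?thesis using char
        by (simp add: add_pow_upd poly_of_const_def univ_poly_one univ_poly_zero)
    qed
    have Caq: "Ca [^]\<^bsub>poly_ring L\<^esub> q = Ca"
    proof -
      have "poly_of_const (a [^]\<^bsub>L \<lparr> carrier := carrier L \<rparr>\<^esub> q) = Ca [^]\<^bsub>poly_ring L\<^esub> q"
        unfolding Ca_def by (rule C.hom_nat_pow) (simp add: a)
      thus ?thesis using aq by (simp add: nat_pow_upd Ca_def)
    qed
    have Xq: "X [^]\<^bsub>poly_ring L\<^esub> q = Xa [^]\<^bsub>poly_ring L\<^esub> q \<oplus>\<^bsub>poly_ring L\<^esub> Ca"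
      using UP.frobenius_pow[OF p charP Xac Cac, of n] q Caq XX by simp
    define Q where "Q = Xa [^]\<^bsub>poly_ring L\<^esub> (q - 1) \<ominus>\<^bsub>poly_ring L\<^esub> \<one>\<^bsub>poly_ring L\<^esub>"
    have Qc: "Q \<in> carrier (poly_ring L)" unfolding Q_def using Xac by simp
    have PQ: "P = Xa \<otimes>\<^bsub>poly_ring L\<^esub> Q"
    proof -
      have qq: "Xa [^]\<^bsub>poly_ring L\<^esub> q = Xa \<otimes>\<^bsub>poly_ring L\<^esub> Xa [^]\<^bsub>poly_ring L\<^esub> (q - 1)"
        using q2 Xac UP.nat_pow_Suc2[of Xa "q - 1"] by simp
      have "P = (Xa [^]\<^bsub>poly_ring L\<^esub> q \<oplus>\<^bsub>poly_ring L\<^esub> Ca) \<ominus>\<^bsub>poly_ring L\<^esub> (Xa \<oplus>\<^bsub>poly_ring L\<^esub> Ca)"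
        unfolding P_def Xq[symmetric] XX[symmetric] ..
      also have "\<dots> = Xa [^]\<^bsub>poly_ring L\<^esub> q \<ominus>\<^bsub>poly_ring L\<^esub> Xa"
        using Xac Cac by (simp add: UP.cancel_helper)
      also have "\<dots> = Xa \<otimes>\<^bsub>poly_ring L\<^esub> Q"
        unfolding qq Q_def using Xac by (simp add: UP.cancel_helper2)
      finally show ?thesis .
    qed
    have "Xa \<otimes>\<^bsub>poly_ring L\<^esub> Q = Xa \<otimes>\<^bsub>poly_ring L\<^esub> (Xa \<otimes>\<^bsub>poly_ring L\<^esub> G)"
      using PQ PG Xac Gc by (simp add: UP.m_assoc numeral_2_eq_2)
    moreover have "Xa \<noteq> \<zero>\<^bsub>poly_ring L\<^esub>" unfolding Xa_def univ_poly_zero by simp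
    ultimately have QG: "Q = Xa \<otimes>\<^bsub>poly_ring L\<^esub> G"
      using UP.m_lcancel Xac Qc Gc by simp
    interpret E: ring_hom_ring "poly_ring L" L "\<lambda>p. eval p a"
      using ring_hom_ringI2[OF UP.ring_axioms ring_axioms eval_is_hom[OF carrier_is_subring a]] .
    have eXa: "eval Xa a = \<zero>" unfolding Xa_def using a by (simp add: r_neg)
    have "eval Q a = \<zero>" unfolding QG using Xac Gc eXa by simp
    moreover have "eval Q a = \<ominus> \<one>"
    proof -
      have "eval Q a = eval (Xa [^]\<^bsub>poly_ring L\<^esub> (q - 1)) a \<oplus> \<ominus> eval \<one>\<^bsub>poly_ring L\<^esub> a"
        unfolding Q_def a_minus_def using Xac by simp
      also have "\<dots> = \<zero> [^] (q - 1) \<oplus> \<ominus> \<one>"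
        using E.hom_nat_pow[OF Xac] eXa by simp
      also have "\<dots> = \<ominus> \<one>" using q2 by (simp add: nat_pow_zero)
      finally show ?thesis .
    qed
    ultimately have "\<ominus> \<one> = \<zero>" by simp
    hence "\<one> = \<zero>" by (metis minus_minus minus_zero one_closed)
    thus False using one_not_zero by simp
  qed
  have setP: "set_mset (roots P) = F"
  proof -
    have "x \<in># roots P \<longleftrightarrow> x \<in> F" for x
      unfolding roots_mem_iff_is_root[OF Pc] is_root_def F_def using evP Pne
      by (auto simp add: r_right_minus_eq)
    thus ?thesis by auto
  qed
  have "size (roots P) = sum (count (roots P)) (set_mset (roots P))"
    by (rule size_multiset_overloaded_eq)
  also have "\<dots> = sum (\<lambda>_. 1) (set_mset (roots P))"
  proof (intro sum.cong refl)
    fix x assume "x \<in> set_mset (roots P)"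
    hence "0 < count (roots P) x" by simp
    thus "count (roots P) x = 1" using mult1[of x] by linarith
  qed
  also have "\<dots> = card F" using setP by simp
  finally show ?thesis using sz unfolding F_def by simp
qed

end

lemma exists_finite_field:
  assumes "primepow (q::nat)"
  shows "\<exists>F :: ((int list \<times> nat) multiset \<Rightarrow> int) ring. field F \<and> card (carrier F) = q"
proof -
  obtain p n where p: "Factorial_Ring.prime (p::nat)" and n: "n > 0" and q: "q = p ^ n"
    using assms unfolding primepow_def by auto
  define R0 where "R0 = residue_ring (int p)"
  interpret R0: residues_prime p R0
  proof unfold_locales
    show "Factorial_Ring.prime p" by (rule p)
    show "R0 \<equiv> residue_ring (int p)" unfolding R0_def by (rule reflexive)
  qed
  define L where "L = R0.alg_closure"
  interpret A: algebraic_closure L "R0.indexed_const ` carrier R0"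
    using R0.alg_closureE(1) unfolding L_def .
  interpret H: ring_hom_ring R0 L R0.indexed_const
    using ring_hom_ringI2[OF R0.ring_axioms A.ring_axioms R0.alg_closureE(2)[folded L_def]] .
  have char: "[p] \<cdot>\<^bsub>L\<^esub> \<one>\<^bsub>L\<^esub> = \<zero>\<^bsub>L\<^esub>"
  proof -
    have "R0.indexed_const ([p] \<cdot>\<^bsub>R0\<^esub> \<one>\<^bsub>R0\<^esub>) = [p] \<cdot>\<^bsub>L\<^esub> \<one>\<^bsub>L\<^esub>"
      using H.hom_add_pow[of "\<one>\<^bsub>R0\<^esub>" p] by simp
    thus ?thesis using R0.char_res by simp
  qed
  define Fs where "Fs = {x \<in> carrier L. x [^]\<^bsub>L\<^esub> q = x}"
  have sf: "subfield Fs L" unfolding Fs_def using A.fix_subfield[OF p char q n] .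
  have cd: "card Fs = q" unfolding Fs_def using A.fix_card[OF p char q n] .
  show ?thesis
    by (rule exI[of _ "L \<lparr> carrier := Fs \<rparr>"]) (simp add: A.subfield_iff(2)[OF sf] cd)
qed

context ring begin
definition lin :: "'a \<Rightarrow> 'a list" where "lin a = [\<one>, \<ominus> a]"
definition dv :: "'a \<Rightarrow> 'a list \<Rightarrow> 'a list" where "dv a f = f pdiv lin a"
definition tay :: "nat \<Rightarrow> 'a list \<Rightarrow> 'a \<Rightarrow> 'a" where "tay j f a = eval ((dv a ^^ j) f) a"
definition pc :: "nat \<Rightarrow> (nat \<Rightarrow> 'a) \<Rightarrow> 'a list" where
  "pc t c = normalize (map (\<lambda>i. c (t - 1 - i)) [0..<t])"

lemma coeff_map_zero:
  assumes "f \<zero> = \<zero>" shows "coeff (map f p) i = f (coeff p i)"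
proof (cases "i < length p")
  case True thus ?thesis using coeff_nth[of i p] coeff_nth[of i "map f p"] by simp
next
  case False thus ?thesis using coeff_length[of p i] coeff_length[of "map f p" i] assms by simp
qed
end

context field begin

lemma lin_closed: "a \<in> carrier R \<Longrightarrow> lin a \<in> carrier (poly_ring R)"
  unfolding lin_def univ_poly_carrier[symmetric] polynomial_def by simp

lemma dv_closed: "a \<in> carrier R \<Longrightarrow> f \<in> carrier (poly_ring R) \<Longrightarrow> dv a f \<in> carrier (poly_ring R)"
  unfolding dv_def using long_division_closed(1)[OF carrier_is_subfield _ lin_closed] by simp

lemma dv_pow_closed: "a \<in> carrier R \<Longrightarrow> f \<in> carrier (poly_ring R) \<Longrightarrow> (dv a ^^ j) f \<in> carrier (poly_ring R)"
  by (induction j) (auto simp: dv_closed)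

lemma tay_closed: "a \<in> carrier R \<Longrightarrow> f \<in> carrier (poly_ring R) \<Longrightarrow> tay j f a \<in> carrier R"
  unfolding tay_def using dv_pow_closed[of a f j] eval_in_carrier polynomial_incl
  by (metis univ_poly_carrier)

lemma tay_Suc: "tay (Suc j) f a = tay j (dv a f) a"
  unfolding tay_def by (simp only: funpow_Suc_right comp_def)

lemma tay_0: "tay 0 f a = eval f a"
  unfolding tay_def by simp

lemma const_poly_eval:
  assumes "r \<in> carrier (poly_ring R)" "length r \<le> 1" "a \<in> carrier R"
  shows "r = poly_of_const (eval r a)"
proof (cases r)
  case Nil thus ?thesis by (simp add: poly_of_const_def)
next
  case (Cons c rs)
  hence r: "r = [c]" using assms(2) by simp
  hence "c \<noteq> \<zero>" "c \<in> carrier R" using assms(1) unfolding univ_poly_carrier[symmetric] polynomial_def by auto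
  thus ?thesis using r by (simp add: poly_of_const_def)
qed

lemma lin_step:
  assumes a: "a \<in> carrier R" and f: "f \<in> carrier (poly_ring R)" and g: "g \<in> carrier (poly_ring R)"
    and e: "eval f a = eval g a"
  shows "f \<ominus>\<^bsub>poly_ring R\<^esub> g = lin a \<otimes>\<^bsub>poly_ring R\<^esub> (dv a f \<ominus>\<^bsub>poly_ring R\<^esub> dv a g)"
proof -
  interpret UP: domain "poly_ring R" using univ_poly_is_domain[OF carrier_is_subring] .
  interpret E: ring_hom_ring "poly_ring R" R "\<lambda>p. eval p a"
    using ring_hom_ringI2[OF UP.ring_axioms ring_axioms eval_is_hom[OF carrier_is_subring a]] .
  have lc: "lin a \<in> carrier (poly_ring R)" using lin_closed[OF a] .
  have el: "eval (lin a) a = \<zero>" unfolding lin_def using a by (simp add: r_neg)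
  have ln: "lin a \<noteq> []" unfolding lin_def by simp
  have dl: "degree (lin a) = 1" unfolding lin_def by simp
  have rem: "h = lin a \<otimes>\<^bsub>poly_ring R\<^esub> dv a h \<oplus>\<^bsub>poly_ring R\<^esub> poly_of_const (eval h a)"
    if h: "h \<in> carrier (poly_ring R)" for h
  proof -
    have dec: "h = lin a \<otimes>\<^bsub>poly_ring R\<^esub> dv a h \<oplus>\<^bsub>poly_ring R\<^esub> (h pmod lin a)"
      using pdiv_pmod[OF carrier_is_subfield h lc] unfolding dv_def .
    have rc: "h pmod lin a \<in> carrier (poly_ring R)"
      using long_division_closed(2)[OF carrier_is_subfield h lc] .
    have dc: "dv a h \<in> carrier (poly_ring R)" using dv_closed[OF a h] .
    have "h pmod lin a = [] \<or> degree (h pmod lin a) < 1"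
      using pmod_degree[OF carrier_is_subfield h lc ln] dl by simp
    hence len: "length (h pmod lin a) \<le> 1" by auto
    have "eval h a = eval (lin a) a \<otimes> eval (dv a h) a \<oplus> eval (h pmod lin a) a"
      using dec lc dc rc by (metis E.hom_add E.hom_mult UP.m_closed)
    also have "\<dots> = eval (h pmod lin a) a"
      using el dc rc E.hom_closed by simp
    finally have "h pmod lin a = poly_of_const (eval h a)"
      using const_poly_eval[OF rc len a] by simp
    thus ?thesis using dec by simp
  qed
  have fc: "dv a f \<in> carrier (poly_ring R)" "dv a g \<in> carrier (poly_ring R)"
    using dv_closed a f g by auto
  have pcc: "poly_of_const (eval g a) \<in> carrier (poly_ring R)"
    using const_poly_eval E.hom_closed[OF g]
    by (simp add: poly_of_const_def univ_poly_carrier[symmetric] polynomial_def)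
  have "f \<ominus>\<^bsub>poly_ring R\<^esub> g = (lin a \<otimes>\<^bsub>poly_ring R\<^esub> dv a f \<oplus>\<^bsub>poly_ring R\<^esub> poly_of_const (eval g a))
     \<ominus>\<^bsub>poly_ring R\<^esub> (lin a \<otimes>\<^bsub>poly_ring R\<^esub> dv a g \<oplus>\<^bsub>poly_ring R\<^esub> poly_of_const (eval g a))"
    using rem[OF f] rem[OF g] e by simp
  also have "\<dots> = lin a \<otimes>\<^bsub>poly_ring R\<^esub> dv a f \<ominus>\<^bsub>poly_ring R\<^esub> lin a \<otimes>\<^bsub>poly_ring R\<^esub> dv a g"
    using UP.cancel_helper lc fc pcc by simp
  also have "\<dots> = lin a \<otimes>\<^bsub>poly_ring R\<^esub> (dv a f \<ominus>\<^bsub>poly_ring R\<^esub> dv a g)"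
    using lc fc by (simp add: a_minus_def UP.r_distr UP.r_minus)
  finally show ?thesis .
qed

lemma tay_divides:
  assumes a: "a \<in> carrier R"
  shows "f \<in> carrier (poly_ring R) \<Longrightarrow> g \<in> carrier (poly_ring R) \<Longrightarrow> (\<forall>j<k. tay j f a = tay j g a) \<Longrightarrow>
    (lin a [^]\<^bsub>poly_ring R\<^esub> k) pdivides (f \<ominus>\<^bsub>poly_ring R\<^esub> g)"
proof (induction k arbitrary: f g)
  interpret UP: domain "poly_ring R" using univ_poly_is_domain[OF carrier_is_subring] .
  case 0
  thus ?case unfolding pdivides_def by (simp add: UP.one_divides)
next
  interpret UP: domain "poly_ring R" using univ_poly_is_domain[OF carrier_is_subring] .
  case (Suc k)
  have lc: "lin a \<in> carrier (poly_ring R)" using lin_closed[OF a] .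
  have fc: "dv a f \<in> carrier (poly_ring R)" "dv a g \<in> carrier (poly_ring R)"
    using dv_closed a Suc.prems by auto
  have e: "eval f a = eval g a" using Suc.prems(3) tay_0 by (metis zero_less_Suc)
  have "\<forall>j<k. tay j (dv a f) a = tay j (dv a g) a" using Suc.prems(3) tay_Suc by auto
  hence "(lin a [^]\<^bsub>poly_ring R\<^esub> k) pdivides (dv a f \<ominus>\<^bsub>poly_ring R\<^esub> dv a g)"
    using Suc.IH fc by simp
  then obtain G where G: "G \<in> carrier (poly_ring R)"
    and eq: "dv a f \<ominus>\<^bsub>poly_ring R\<^esub> dv a g = (lin a [^]\<^bsub>poly_ring R\<^esub> k) \<otimes>\<^bsub>poly_ring R\<^esub> G"
    unfolding pdivides_def by auto
  have "f \<ominus>\<^bsub>poly_ring R\<^esub> g = lin a \<otimes>\<^bsub>poly_ring R\<^esub> ((lin a [^]\<^bsub>poly_ring R\<^esub> k) \<otimes>\<^bsub>poly_ring R\<^esub> G)"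
    using lin_step[OF a Suc.prems(1,2) e] eq by simp
  also have "\<dots> = (lin a [^]\<^bsub>poly_ring R\<^esub> Suc k) \<otimes>\<^bsub>poly_ring R\<^esub> G"
    using lc G UP.m_lcomm[of "lin a" "lin a [^]\<^bsub>poly_ring R\<^esub> k" G] by (simp add: UP.nat_pow_Suc2 UP.m_assoc)
  finally show ?case unfolding pdivides_def using G lc by (intro dividesI) auto
qed

lemma roots_sum_bound:
  assumes h: "h \<in> carrier (poly_ring R)" "h \<noteq> []" and A: "A \<subseteq> carrier R" "finite A"
    and dv: "\<And>a. a \<in> A \<Longrightarrow> (lin a [^]\<^bsub>poly_ring R\<^esub> (k a)) pdivides h"
  shows "(\<Sum>a\<in>A. k a) \<le> degree h"
proof -
  let ?M = "roots h"
  have "(\<Sum>a\<in>A. k a) \<le> (\<Sum>a\<in>A. count ?M a)"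
  proof (intro sum_mono)
    fix a assume aA: "a \<in> A"
    hence "k a \<le> alg_mult h a" using alg_multE(2)[of a h "k a"] A h dv[OF aA] unfolding lin_def by auto
    thus "k a \<le> count ?M a" using alg_mult_eq_count_roots[OF h(1)] by simp
  qed
  also have "\<dots> = (\<Sum>a\<in>A \<inter> set_mset ?M. count ?M a)"
    using A by (intro sum.mono_neutral_right) auto
  also have "\<dots> \<le> (\<Sum>a\<in>set_mset ?M. count ?M a)"
    by (intro sum_mono2) auto
  also have "\<dots> = size ?M" by (rule size_multiset_overloaded_eq[symmetric])
  also have "\<dots> \<le> degree h" using size_roots_le_degree[OF h(1)] .
  finally show ?thesis .
qed

end

context field begin

lemma pc_carrier: "c \<in> {..<t} \<rightarrow> carrier R \<Longrightarrow> pc t c \<in> carrier (poly_ring R)"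
  unfolding pc_def univ_poly_carrier[symmetric] by (rule normalize_gives_polynomial) auto

lemma pc_coeff: "coeff (pc t c) i = (if i < t then c i else \<zero>)"
proof -
  have "coeff (pc t c) i = coeff (map (\<lambda>i. c (t - 1 - i)) [0..<t]) i"
    unfolding pc_def by (rule normalize_coeff[symmetric, THEN fun_cong])
  also have "\<dots> = (if i < t then c i else \<zero>)"
  proof (cases "i < t")
    case True thus ?thesis using coeff_nth[of i "map (\<lambda>i. c (t - 1 - i)) [0..<t]"] by simp
  next
    case False thus ?thesis using coeff_length[of "map (\<lambda>i. c (t - 1 - i)) [0..<t]" i] by simp
  qed
  finally show ?thesis .
qed

lemma coeff_minus:
  assumes f: "f \<in> carrier (poly_ring R)" and g: "g \<in> carrier (poly_ring R)"
  shows "coeff (f \<ominus>\<^bsub>poly_ring R\<^esub> g) i = coeff f i \<ominus> coeff g i"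
proof -
  have ng: "\<ominus>\<^bsub>poly_ring R\<^esub> g = map (\<lambda>a. \<ominus> a) g"
    using univ_poly_a_inv_def'[OF carrier_is_subring g] .
  have sf: "set f \<subseteq> carrier R" using f unfolding univ_poly_carrier[symmetric] polynomial_def by auto
  have sg0: "set g \<subseteq> carrier R" using g unfolding univ_poly_carrier[symmetric] polynomial_def by auto
  have sg: "set (map (\<lambda>a. \<ominus> a) g) \<subseteq> carrier R" using sg0 by auto
  have "coeff (f \<ominus>\<^bsub>poly_ring R\<^esub> g) i = coeff (poly_add f (map (\<lambda>a. \<ominus> a) g)) i"
    unfolding a_minus_def ng univ_poly_add ..
  also have "\<dots> = coeff f i \<oplus> coeff (map (\<lambda>a. \<ominus> a) g) i"
    using poly_add_coeff[OF sf sg] by simp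
  also have "\<dots> = coeff f i \<ominus> coeff g i"
    using coeff_map_zero[of "\<lambda>a. \<ominus> a" g i] by (simp add: a_minus_def)
  finally show ?thesis .
qed

lemma main_inj:
  assumes el: "bij_betw el {..<q} (carrier R)" and fin: "finite (carrier R)"
    and ksum: "(\<Sum>i<Suc q. k i) = t"
    and c: "c \<in> {..<t} \<rightarrow>\<^sub>E carrier R" and c': "c' \<in> {..<t} \<rightarrow>\<^sub>E carrier R"
    and aF: "\<And>i d. i < q \<Longrightarrow> d < k i \<Longrightarrow> tay d (pc t c) (el i) = tay d (pc t c') (el i)"
    and aI: "\<And>j. t - k q \<le> j \<Longrightarrow> j < t \<Longrightarrow> c j = c' j"
  shows "c = c'"
proof -
  interpret UP: domain "poly_ring R" using univ_poly_is_domain[OF carrier_is_subring] .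
  have pcc: "pc t c \<in> carrier (poly_ring R)" "pc t c' \<in> carrier (poly_ring R)"
    using pc_carrier c c' by auto
  define h where "h = pc t c \<ominus>\<^bsub>poly_ring R\<^esub> pc t c'"
  have hc: "h \<in> carrier (poly_ring R)" unfolding h_def using pcc by simp
  have "h = []"
  proof (rule ccontr)
    assume hne: "h \<noteq> []"
    have coeffh: "coeff h i = \<zero>" if i: "t - k q \<le> i" for i
    proof (cases "i < t")
      case True
      hence "c i = c' i" using aI i by simp
      moreover have "c i \<in> carrier R" using c True by auto
      ultimately show ?thesis unfolding h_def using coeff_minus[OF pcc] pc_coeff True
        by (simp add: r_right_minus_eq)
    next
      case False
      thus ?thesis unfolding h_def using coeff_minus[OF pcc] pc_coeff by (simp add: a_minus_def)
    qed
    have "lead_coeff h \<noteq> \<zero>" using hc hne unfolding univ_poly_carrier[symmetric] polynomial_def by simp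
    hence cd: "coeff h (degree h) \<noteq> \<zero>" using hne lead_coeff_simp by metis
    have deg: "degree h < t - k q"
    proof (rule ccontr)
      assume "\<not> degree h < t - k q"
      hence "t - k q \<le> degree h" by simp
      thus False using coeffh cd by blast
    qed
    define kk where "kk a = k (the_inv_into {..<q} el a)" for a
    have dvs: "(lin a [^]\<^bsub>poly_ring R\<^esub> (kk a)) pdivides h" if a: "a \<in> carrier R" for a
    proof -
      define i where "i = the_inv_into {..<q} el a"
      have i: "i < q" "el i = a" unfolding i_def
        using a el bij_betw_the_inv_into[OF el] f_the_inv_into_f_bij_betw[OF el]
        by (auto simp: bij_betw_def)
      show ?thesis unfolding kk_def i_def[symmetric] h_def
        using tay_divides[OF a pcc] aF[OF i(1)] i(2) by simp
    qed
    have "(\<Sum>a\<in>carrier R. kk a) \<le> degree h"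
      using roots_sum_bound[OF hc hne _ fin] dvs by simp
    moreover have "(\<Sum>a\<in>carrier R. kk a) = (\<Sum>i<q. k i)"
    proof -
      have "(\<Sum>i<q. kk (el i)) = (\<Sum>a\<in>carrier R. kk a)"
        by (rule sum.reindex_bij_betw[OF el])
      moreover have "kk (el i) = k i" if "i < q" for i
        unfolding kk_def using the_inv_into_f_f[of el "{..<q}" i] el that by (simp add: bij_betw_def)
      hence "(\<Sum>i<q. kk (el i)) = (\<Sum>i<q. k i)" by (intro sum.cong) auto
      ultimately show ?thesis by linarith
    qed
    moreover have "(\<Sum>i<q. k i) + k q = t" using ksum by simp
    ultimately show False using deg by linarith
  qed
  hence "pc t c \<ominus>\<^bsub>poly_ring R\<^esub> pc t c' = \<zero>\<^bsub>poly_ring R\<^esub>" unfolding h_def univ_poly_zero .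
  hence "pc t c = pc t c'" using UP.r_right_minus_eq[OF pcc] by simp
  hence "coeff (pc t c) i = coeff (pc t c') i" for i by simp
  hence ceq: "c i = c' i" if "i < t" for i using pc_coeff[of t c i] pc_coeff[of t c' i] that by simp
  show ?thesis by (rule PiE_ext[OF c c']) (simp add: ceq)
qed

end

lemma block_div:
  assumes "(s::nat) > 0" "i * s + 1 \<le> x" "x \<le> (i + 1) * s"
  shows "(x - 1) div s = i"
proof -
  have "i * s \<le> x - 1" "x - 1 < (i + 1) * s" using assms by auto
  thus ?thesis using assms(1) by (metis add.commute div_nat_eqI mult.commute plus_1_eq_Suc)
qed

lemma anti_ideal_top:
  assumes J: "rt_anti_ideal m s J" and i: "i < m" and s: "s > 0"
    and x: "i * s + 1 \<le> x" "x \<le> (i + 1) * s"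
    and d: "(i + 1) * s - x < card (J \<inter> {i * s + 1..(i + 1) * s})"
  shows "x \<in> J"
proof (rule ccontr)
  assume xJ: "x \<notin> J"
  have ms: "(i + 1) * s \<le> m * s" using i mult_le_mono1[of "i + 1" m s] by simp
  have sub: "J \<inter> {i * s + 1..(i + 1) * s} \<subseteq> {x + 1..(i + 1) * s}"
  proof
    fix y assume y: "y \<in> J \<inter> {i * s + 1..(i + 1) * s}"
    show "y \<in> {x + 1..(i + 1) * s}"
    proof (rule ccontr)
      assume "y \<notin> {x + 1..(i + 1) * s}"
      hence yx: "y \<le> x" using y by auto
      have xI: "x \<in> {1..m * s} - J" using xJ x ms by auto
      have "rt_le m s y x"
        unfolding rt_le_def using y x ms yx block_div[OF s, of i y] block_div[OF s, of i x] by auto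
      hence "y \<in> {1..m * s} - J" using J xI unfolding rt_anti_ideal_def rt_ideal_def by blast
      thus False using y by auto
    qed
  qed
  have "card (J \<inter> {i * s + 1..(i + 1) * s}) \<le> card {x + 1..(i + 1) * s}"
    by (rule card_mono[OF _ sub]) simp
  thus False using d by simp
qed

lemma anti_ideal_card:
  assumes J: "rt_anti_ideal m s J" and s: "(s::nat) > 0"
  shows "card J = (\<Sum>i<m. card (J \<inter> {i * s + 1..(i + 1) * s}))"
proof -
  have "J = (\<Union>i<m. J \<inter> {i * s + 1..(i + 1) * s})"
  proof
    show "J \<subseteq> (\<Union>i<m. J \<inter> {i * s + 1..(i + 1) * s})"
    proof
      fix x assume xJ: "x \<in> J"
      hence x: "1 \<le> x" "x \<le> m * s" using J unfolding rt_anti_ideal_def by auto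
      define i where "i = (x - 1) div s"
      have "i * s \<le> x - 1" unfolding i_def using div_times_less_eq_dividend[of "x - 1" s] by (simp add: mult.commute)
      moreover have "x - 1 < (i + 1) * s" unfolding i_def using s
        by (metis add.commute dividend_less_div_times mult.commute mult_Suc_right plus_1_eq_Suc)
      moreover have "i < m" unfolding i_def using x s
        by (metis Suc_le_eq diff_less div_less_iff_less_mult less_le_trans zero_less_one)
      ultimately have "x \<in> J \<inter> {i * s + 1..(i + 1) * s}" "i \<in> {..<m}" using xJ x by auto
      thus "x \<in> (\<Union>i<m. J \<inter> {i * s + 1..(i + 1) * s})" by blast
    qed
  qed auto
  also have "card \<dots> = (\<Sum>i<m. card (J \<inter> {i * s + 1..(i + 1) * s}))"
  proof (rule card_UN_disjoint)
    show "\<forall>i\<in>{..<m}. \<forall>j\<in>{..<m}. i \<noteq> j \<longrightarrow>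
      (J \<inter> {i * s + 1..(i + 1) * s}) \<inter> (J \<inter> {j * s + 1..(j + 1) * s}) = {}"
    proof (intro ballI impI)
      fix i j :: nat assume "i \<noteq> j"
      show "(J \<inter> {i * s + 1..(i + 1) * s}) \<inter> (J \<inter> {j * s + 1..(j + 1) * s}) = {}"
      proof (rule ccontr)
        assume "(J \<inter> {i * s + 1..(i + 1) * s}) \<inter> (J \<inter> {j * s + 1..(j + 1) * s}) \<noteq> {}"
        then obtain x where "i * s + 1 \<le> x" "x \<le> (i + 1) * s" "j * s + 1 \<le> x" "x \<le> (j + 1) * s"
          by auto
        hence "(x - 1) div s = i" "(x - 1) div s = j" using block_div[OF s] by blast+
        thus False using \<open>i \<noteq> j\<close> by simp
      qed
    qed
  qed auto
  finally show ?thesis .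
qed

context field begin

lemma dv_nil: "a \<in> carrier R \<Longrightarrow> dv a [] = []"
  unfolding dv_def using long_division_zero(1)[OF carrier_is_subfield lin_closed] by simp

lemma dv_pow_nil: "a \<in> carrier R \<Longrightarrow> (dv a ^^ n) [] = []"
  by (induction n) (auto simp: dv_nil)

lemma tay_nil: "a \<in> carrier R \<Longrightarrow> tay d [] a = \<zero>"
  unfolding tay_def by (simp add: dv_pow_nil)

lemma one_poly_carrier: "[\<one>] \<in> carrier (poly_ring R)"
  unfolding univ_poly_carrier[symmetric] polynomial_def by simp

lemma tay_one: "a \<in> carrier R \<Longrightarrow> tay d [\<one>] a \<in> {\<zero>, \<one>}"
proof (cases d)
  case 0
  assume a: "a \<in> carrier R"
  thus ?thesis using 0 by (simp add: tay_0)
next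
  case (Suc d')
  assume a: "a \<in> carrier R"
  have "dv a [\<one>] = []"
    unfolding dv_def using pmod_const(1)[OF carrier_is_subfield one_poly_carrier lin_closed[OF a]]
    by (simp add: lin_def)
  thus ?thesis using Suc tay_Suc tay_nil a by simp
qed

lemma pc_eq_coeff:
  assumes "c \<in> {..<t} \<rightarrow> carrier R" "p \<in> carrier (poly_ring R)"
    and "\<And>i. coeff p i = (if i < t then c i else \<zero>)"
  shows "pc t c = p"
proof -
  have "polynomial (carrier R) (pc t c)" "polynomial (carrier R) p"
    using pc_carrier[OF assms(1)] assms(2) univ_poly_carrier by blast+
  moreover have "coeff (pc t c) = coeff p" using pc_coeff assms(3) by auto
  ultimately show ?thesis using coeff_iff_polynomial_cond by blast
qed

end

definition (in ring) ent :: "nat \<Rightarrow> nat \<Rightarrow> (nat \<Rightarrow> 'a) \<Rightarrow> (nat \<Rightarrow> 'a) \<Rightarrow> nat \<Rightarrow> 'a" where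
  "ent q t el c col = (if (col - 1) div t < q
      then tay (t - 1 - (col - 1) mod t) (pc t c) (el ((col - 1) div t))
      else c ((col - 1) mod t))"

context field begin

lemma ent_closed:
  assumes el: "el ` {..<q} \<subseteq> carrier R" and t: "t > 0" and c: "c \<in> {..<t} \<rightarrow>\<^sub>E carrier R"
  shows "ent q t el c col \<in> carrier R"
proof -
  have cP: "c \<in> {..<t} \<rightarrow> carrier R" using c by auto
  show ?thesis
  proof (cases "(col - 1) div t < q")
    case True
    hence "el ((col - 1) div t) \<in> carrier R" using el by auto
    thus ?thesis unfolding ent_def using True tay_closed pc_carrier[OF cP] by simp
  next
    case False
    have "(col - 1) mod t < t" using t by simp
    thus ?thesis unfolding ent_def using False cP by auto
  qed
qed

lemma ent_inj:
  assumes el: "bij_betw el {..<q} (carrier R)" and fin: "finite (carrier R)" and t: "t > 0"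
    and J: "rt_anti_ideal (q + 1) t J" and cJ: "card J = t"
    and c: "c \<in> {..<t} \<rightarrow>\<^sub>E carrier R" and c': "c' \<in> {..<t} \<rightarrow>\<^sub>E carrier R"
    and eq: "\<And>col. col \<in> J \<Longrightarrow> ent q t el c col = ent q t el c' col"
  shows "c = c'"
proof -
  define k where "k i = card (J \<inter> {i * t + 1..(i + 1) * t})" for i
  have ksum: "(\<Sum>i<Suc q. k i) = t" using anti_ideal_card[OF J t] cJ unfolding k_def by simp
  have kle: "k i \<le> t" for i
  proof -
    have "k i \<le> card {i * t + 1..(i + 1) * t}" unfolding k_def by (intro card_mono) auto
    thus ?thesis by simp
  qed
  show ?thesis
  proof (rule main_inj[OF el fin ksum c c'])
    fix i d assume i: "i < q" and d: "d < k i"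
    define col where "col = (i + 1) * t - d"
    have dt: "d < t" using d kle[of i] by simp
    have b1: "i * t + 1 \<le> col" unfolding col_def using dt by (simp add: algebra_simps)
    have b2: "col \<le> (i + 1) * t" unfolding col_def by simp
    have "(i + 1) * t - col = d" unfolding col_def using dt by (simp add: algebra_simps)
    hence colJ: "col \<in> J" using anti_ideal_top[OF J _ t b1 b2] i d unfolding k_def by simp
    have dv: "(col - 1) div t = i" using block_div[OF t b1 b2] .
    have "(col - 1) mod t = (col - 1) - i * t" using dv minus_div_mult_eq_mod[of "col - 1" t] by simp
    also have "\<dots> = t - 1 - d" unfolding col_def using dt by (simp add: algebra_simps)
    finally have md: "(col - 1) mod t = t - 1 - d" .
    have "t - 1 - (t - 1 - d) = d" using dt by simp
    hence "ent q t el c col = tay d (pc t c) (el i)" "ent q t el c' col = tay d (pc t c') (el i)"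
      unfolding ent_def dv md using i by auto
    thus "tay d (pc t c) (el i) = tay d (pc t c') (el i)" using eq[OF colJ] by simp
  next
    fix j assume j1: "t - k q \<le> j" and j2: "j < t"
    define col where "col = q * t + j + 1"
    have b1: "q * t + 1 \<le> col" unfolding col_def by simp
    have b2: "col \<le> (q + 1) * t" unfolding col_def using j2 by simp
    have kq: "k q \<ge> 1" using j1 j2 by linarith
    have "(q + 1) * t - col = t - 1 - j" unfolding col_def using j2 by (simp add: algebra_simps)
    hence colJ: "col \<in> J" using anti_ideal_top[OF J _ t b1 b2] j1 j2 kq unfolding k_def by simp
    have dv: "(col - 1) div t = q" using block_div[OF t b1 b2] .
    have md: "(col - 1) mod t = j" unfolding col_def using j2 by simp
    have "ent q t el c col = c j" "ent q t el c' col = c' j" unfolding ent_def dv md by auto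
    thus "c j = c' j" using eq[OF colJ] by simp
  qed
qed

end

context field begin

lemma ent_surj:
  assumes el: "bij_betw el {..<q} (carrier R)" and fin: "finite (carrier R)" and cq: "card (carrier R) = q"
    and t: "t > 0"
    and J: "rt_anti_ideal (q + 1) t J" and cJ: "card J = t"
    and g: "g \<in> J \<rightarrow>\<^sub>E carrier R"
  shows "\<exists>c \<in> {..<t} \<rightarrow>\<^sub>E carrier R. \<forall>col\<in>J. ent q t el c col = g col"
proof -
  let ?C = "{..<t} \<rightarrow>\<^sub>E carrier R"
  let ?T = "J \<rightarrow>\<^sub>E carrier R"
  define \<Phi> where "\<Phi> c = restrict (ent q t el c) J" for c
  have elc: "el ` {..<q} \<subseteq> carrier R" using el by (simp add: bij_betw_def)
  have finJ: "finite J" using cJ t by (intro card_ge_0_finite) simp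
  have inj: "inj_on \<Phi> ?C"
  proof (rule inj_onI)
    fix c c' assume c: "c \<in> ?C" and c': "c' \<in> ?C" and e: "\<Phi> c = \<Phi> c'"
    have "ent q t el c col = ent q t el c' col" if "col \<in> J" for col
      using fun_cong[OF e, of col] that unfolding \<Phi>_def by simp
    thus "c = c'" using ent_inj[OF el fin t J cJ c c'] by blast
  qed
  have sub: "\<Phi> ` ?C \<subseteq> ?T" unfolding \<Phi>_def using ent_closed[OF elc t] by auto
  have "card (\<Phi> ` ?C) = card ?C" using card_image[OF inj] .
  also have "\<dots> = q ^ t" using cq by (simp add: card_PiE)
  also have "\<dots> = card ?T" using cq cJ finJ by (simp add: card_PiE)
  finally have cardeq: "card (\<Phi> ` ?C) = card ?T" .
  have finT: "finite ?T" using finJ fin by (simp add: finite_PiE)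
  have "\<Phi> ` ?C = ?T" by (rule card_subset_eq[OF finT sub cardeq])
  hence "g \<in> \<Phi> ` ?C" using g by simp
  then obtain c where c: "c \<in> ?C" and "g = \<Phi> c" by auto
  hence "\<forall>col\<in>J. ent q t el c col = g col" unfolding \<Phi>_def by simp
  thus ?thesis using c by blast
qed

end

lemma field_OCA:
  fixes R :: "('a, 'b) ring_scheme" (structure)
  assumes fR: "field R" and cq: "card (carrier R) = q" and q2: "q \<ge> 2" and t2: "t \<ge> 2"
  shows "\<exists>A. is_OCA (q ^ t - 2) t (q + 1) t (q - 1) A"
proof -
  interpret field R by (rule fR)
  have t: "t > 0" using t2 by simp
  have fin: "finite (carrier R)" using cq q2 by (intro card_ge_0_finite) simp
  have z1: "\<zero> \<noteq> \<one>" using one_not_zero by metis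
  define D where "D = carrier R - {\<zero>, \<one>}"
  have finD: "finite D" using fin unfolding D_def by simp
  have cD: "card D = q - 2" unfolding D_def using cq z1 fin by (simp add: card_Diff_subset)
  obtain gg where gg: "bij_betw gg D {0..<card D}" using ex_bij_betw_finite_nat[OF finD] by blast
  define enc where "enc x = (if x = \<zero> then 0 else if x = \<one> then 1 else gg x + 2)" for x
  have encD: "x \<in> D \<Longrightarrow> enc x = gg x + 2" for x unfolding enc_def D_def by auto
  have ggD: "x \<in> D \<Longrightarrow> gg x < q - 2" for x using gg cD by (auto simp: bij_betw_def)
  have enc_lt: "x \<in> carrier R \<Longrightarrow> enc x < q" for x
    using ggD[of x] q2 unfolding enc_def D_def by auto
  have enc_inj: "inj_on enc (carrier R)"
  proof (rule inj_onI)
    fix x y assume x: "x \<in> carrier R" and y: "y \<in> carrier R" and e: "enc x = enc y"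
    show "x = y"
    proof (cases "x \<in> D \<and> y \<in> D")
      case True
      hence "gg x = gg y" using e encD by simp
      thus ?thesis using True gg by (auto simp: bij_betw_def inj_on_def)
    next
      case False
      thus ?thesis using e x y z1 unfolding enc_def D_def by (auto split: if_splits)
    qed
  qed
  have enc_bij: "bij_betw enc (carrier R) {..<q}"
  proof -
    have "enc ` carrier R \<subseteq> {..<q}" using enc_lt by auto
    moreover have "card (enc ` carrier R) = card {..<q}" using card_image[OF enc_inj] cq by simp
    ultimately have "enc ` carrier R = {..<q}" by (intro card_subset_eq) auto
    thus ?thesis using enc_inj by (simp add: bij_betw_def)
  qed
  define el where "el = the_inv_into (carrier R) enc"
  have el: "bij_betw el {..<q} (carrier R)" unfolding el_def by (rule bij_betw_the_inv_into[OF enc_bij])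
  have enc_el: "n < q \<Longrightarrow> enc (el n) = n" for n
    unfolding el_def using f_the_inv_into_f_bij_betw[OF enc_bij] by simp
  have enc0: "enc \<zero> = 0" and enc1: "enc \<one> = 1" unfolding enc_def using z1 by auto
  have elc: "el ` {..<q} \<subseteq> carrier R" using el by (simp add: bij_betw_def)
  let ?C = "{..<t} \<rightarrow>\<^sub>E carrier R"
  define c0 where "c0 = (\<lambda>i\<in>{..<t}. \<zero>)"
  define c1 where "c1 = (\<lambda>i\<in>{..<t}. if i = 0 then \<one> else \<zero>)"
  have c0C: "c0 \<in> ?C" and c1C: "c1 \<in> ?C" unfolding c0_def c1_def by auto
  have "c0 0 = \<zero>" "c1 0 = \<one>" using t unfolding c0_def c1_def by auto
  hence c01: "c0 \<noteq> c1" using z1 by metis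
  have pc0: "pc t c0 = []"
    by (rule pc_eq_coeff) (use c0C in \<open>auto simp: c0_def\<close>)
  have pc1: "pc t c1 = [\<one>]"
    by (rule pc_eq_coeff) (use c1C t in \<open>auto simp: c1_def one_poly_carrier\<close>)
  have ent01: "ent q t el c col \<in> {\<zero>, \<one>}" if c: "c = c0 \<or> c = c1" for c col
  proof (cases "(col - 1) div t < q")
    case True
    hence a: "el ((col - 1) div t) \<in> carrier R" using elc by auto
    have e: "ent q t el c col = tay (t - 1 - (col - 1) mod t) (pc t c) (el ((col - 1) div t))"
      using True unfolding ent_def by simp
    show ?thesis
    proof (cases "c = c0")
      case True thus ?thesis using e pc0 tay_nil[OF a] by simp
    next
      case False hence "c = c1" using c by simp
      thus ?thesis using e pc1 tay_one[OF a, of "t - 1 - (col - 1) mod t"] by simp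
    qed
  next
    case False
    have "(col - 1) mod t < t" using t by simp
    thus ?thesis using c False unfolding ent_def c0_def c1_def by (auto split: if_splits)
  qed
  define S where "S = ?C - {c0, c1}"
  have finC: "finite ?C" using fin by (simp add: finite_PiE)
  have cardC: "card ?C = q ^ t" using cq by (simp add: card_PiE)
  have cardS: "card S = q ^ t - 2" unfolding S_def using c0C c1C c01 finC cardC
    by (simp add: card_Diff_subset)
  obtain rw where rw: "bij_betw rw {0..<card S} S" using ex_bij_betw_nat_finite[of S] finC S_def by auto
  define N where "N = q ^ t - 2"
  define A where "A r col = enc (ent q t el (rw r) col) - 1" for r col
  have rwS: "r < N \<Longrightarrow> rw r \<in> S" for r using rw cardS unfolding N_def by (auto simp: bij_betw_def)
  have row_exists: "\<exists>r<N. \<forall>j\<in>J. A r j = enc (ent q t el c j) - 1" if c: "c \<in> S" for c J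
  proof -
    have "c \<in> rw ` {0..<card S}" using rw c by (simp add: bij_betw_def)
    then obtain r where "r \<in> {0..<card S}" "rw r = c" by blast
    thus ?thesis unfolding A_def N_def using cardS by auto
  qed
  have "is_OCA N t (q + 1) t (q - 1) A"
    unfolding is_OCA_def
  proof (intro conjI allI impI ballI)
    fix r col assume r: "r < N" and col: "col \<in> {1..(q + 1) * t}"
    have "rw r \<in> ?C" using rwS[OF r] unfolding S_def by auto
    hence "ent q t el (rw r) col \<in> carrier R" using ent_closed[OF elc t] by blast
    hence "enc (ent q t el (rw r) col) < q" using enc_lt by blast
    thus "A r col < q - 1" unfolding A_def using q2 by linarith
  next
    fix J assume JJ: "rt_anti_ideal (q + 1) t J \<and> card J = t"
    hence J: "rt_anti_ideal (q + 1) t J" and cJ: "card J = t" by auto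
    show "covered N (q - 1) A J" unfolding covered_def
    proof
      fix f assume f: "f \<in> J \<rightarrow>\<^sub>E {..<q - 1}"
      show "\<exists>r<N. \<forall>j\<in>J. A r j = f j"
      proof (cases "\<exists>j0\<in>J. f j0 \<noteq> 0")
        case True
        then obtain j0 where j0: "j0 \<in> J" "f j0 \<noteq> 0" by blast
        define g where "g = (\<lambda>j\<in>J. el (f j + 1))"
        have fq: "f j + 1 < q" if "j \<in> J" for j
        proof -
          have "f j < q - 1" using f that by (auto simp: PiE_iff)
          thus ?thesis by linarith
        qed
        have g: "g \<in> J \<rightarrow>\<^sub>E carrier R" unfolding g_def using elc fq by auto
        obtain c where c: "c \<in> ?C" and cg: "\<forall>col\<in>J. ent q t el c col = g col"
          using ent_surj[OF el fin cq t J cJ g] by blast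
        have ev: "enc (ent q t el c j) = f j + 1" if "j \<in> J" for j
          using cg that enc_el[OF fq[OF that]] unfolding g_def by simp
        have "c \<noteq> c0 \<and> c \<noteq> c1"
        proof (rule ccontr)
          assume "\<not> (c \<noteq> c0 \<and> c \<noteq> c1)"
          hence "ent q t el c j0 \<in> {\<zero>, \<one>}" using ent01 by blast
          hence "enc (ent q t el c j0) \<le> 1" using enc0 enc1 by auto
          thus False using ev[OF j0(1)] j0(2) by simp
        qed
        hence "c \<in> S" unfolding S_def using c by auto
        from row_exists[OF this, of J] obtain r where "r < N" "\<forall>j\<in>J. A r j = enc (ent q t el c j) - 1"
          by blast
        thus ?thesis using ev by auto
      next
        case False
        hence f0: "\<forall>j\<in>J. f j = 0" by auto
        have "card J \<ge> 2" using cJ t2 by simp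
        hence "J \<noteq> {}" by auto
        then obtain j0 where j0: "j0 \<in> J" by blast
        have finJ: "finite J" using cJ t by (intro card_ge_0_finite) simp
        have "card (J - {j0}) \<ge> 1" using \<open>card J \<ge> 2\<close> j0 finJ by simp
        hence "J - {j0} \<noteq> {}" by (metis card.empty not_one_le_zero)
        then obtain j1 where "j1 \<in> J - {j0}" by blast
        hence j01: "j0 \<in> J" "j1 \<in> J" "j0 \<noteq> j1" using j0 by auto
        define g0 where "g0 = (\<lambda>j\<in>J. \<zero>)"
        define g1 where "g1 = (\<lambda>j\<in>J. \<one>)"
        define g2 where "g2 = (\<lambda>j\<in>J. if j = j0 then \<zero> else \<one>)"
        have gs: "g0 \<in> J \<rightarrow>\<^sub>E carrier R" "g1 \<in> J \<rightarrow>\<^sub>E carrier R" "g2 \<in> J \<rightarrow>\<^sub>E carrier R"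
          unfolding g0_def g1_def g2_def by auto
        obtain d0 where d0: "d0 \<in> ?C" "\<forall>col\<in>J. ent q t el d0 col = g0 col"
          using ent_surj[OF el fin cq t J cJ gs(1)] by blast
        obtain d1 where d1: "d1 \<in> ?C" "\<forall>col\<in>J. ent q t el d1 col = g1 col"
          using ent_surj[OF el fin cq t J cJ gs(2)] by blast
        obtain d2 where d2: "d2 \<in> ?C" "\<forall>col\<in>J. ent q t el d2 col = g2 col"
          using ent_surj[OF el fin cq t J cJ gs(3)] by blast
        have n01: "d0 \<noteq> d1" using d0 d1 j01 z1 unfolding g0_def g1_def by force
        have n12: "d1 \<noteq> d2" using d1 d2 j01 z1 unfolding g1_def g2_def by force
        have n02: "d0 \<noteq> d2" using d0 d2 j01 z1 unfolding g0_def g2_def by force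
        have v01: "\<forall>j\<in>J. ent q t el d j \<in> {\<zero>, \<one>}" if "d \<in> {d0, d1, d2}" for d
          using that d0 d1 d2 unfolding g0_def g1_def g2_def by (auto split: if_splits)
        obtain d where d: "d \<in> {d0, d1, d2}" "d \<notin> {c0, c1}"
          using n01 n12 n02 by blast
        have "d \<in> S" unfolding S_def using d d0 d1 d2 by auto
        from row_exists[OF this, of J] obtain r where r: "r < N" "\<forall>j\<in>J. A r j = enc (ent q t el d j) - 1"
          by blast
        have "\<forall>j\<in>J. A r j = f j"
        proof
          fix j assume j: "j \<in> J"
          hence "enc (ent q t el d j) \<le> 1" using v01[OF d(1)] enc0 enc1 by auto
          thus "A r j = f j" using r j f0 by auto
        qed
        thus ?thesis using r by blast
      qed
    qed
  qed
  thus ?thesis unfolding N_def by blast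
qed

theorem corollary3:
  fixes q t :: nat
  assumes "primepow q" and "t \<ge> 2"
  shows "OCAN t (q + 1) t (q - 1) \<le> q ^ t - 2"
proof -
  obtain F :: "((int list \<times> nat) multiset \<Rightarrow> int) ring"
    where F: "field F" "card (carrier F) = q"
    using exists_finite_field[OF assms(1)] by blast
  have q2: "q \<ge> 2" using primepow_gt_Suc_0[OF assms(1)] by simp
  obtain A where A: "is_OCA (q ^ t - 2) t (q + 1) t (q - 1) A"
    using field_OCA[OF F q2 assms(2)] by blast
  show ?thesis unfolding OCAN_def by (rule Least_le) (use A in blast)
qed

end
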